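(* Let $\mathcal H$ be an $n$-vertex linear hypergraph and let $t := e(\mathcal H) - n$. If $e_1,\dots,e_{2t} \in \mathcal H$ are distinct, pairwise intersecting edges such that $\{e_{2i-1},e_{2i}\}$ is a useful pair for each $i\in[t]$, then $\mathcal H$ has a proper edge-colouring with $n$ colours in which each colour is assigned to at most two edges.
   Context: A hypergraph has a finite vertex set and a set of nonempty edges; linear means any two distinct edges share at most one vertex; $e(\mathcal H)$ is the number of edges. For an edge $e$, $N(e)$ denotes the set of edges $f \ne e$ of $\mathcal H$ with $f\cap e\neq\varnothing$. In an $n$-vertex hypergraph, a pair $\{e,f\}\subseteq\mathcal H$ is useful if $e\ne f$, $e\cap f\ne\varnothing$, and $|N(e)\cap N(f)| \le n-2$. A proper edge-colouring assigns colours to edges so that distinct intersecting edges get different colours. *)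

theory Defs
  imports Main
begin

definition hypergraph :: "'a set \<Rightarrow> 'a set set \<Rightarrow> bool" where
  "hypergraph V H \<longleftrightarrow> finite V \<and> (\<forall>e\<in>H. e \<noteq> {} \<and> e \<subseteq> V)"

definition linear_hg :: "'a set set \<Rightarrow> bool" where
  "linear_hg H \<longleftrightarrow> (\<forall>e\<in>H. \<forall>f\<in>H. e \<noteq> f \<longrightarrow> card (e \<inter> f) \<le> 1)"

definition nbhd :: "'a set set \<Rightarrow> 'a set \<Rightarrow> 'a set set" where
  "nbhd H e = {f \<in> H. f \<noteq> e \<and> f \<inter> e \<noteq> {}}"

definition useful_pair :: "'a set \<Rightarrow> 'a set set \<Rightarrow> 'a set \<Rightarrow> 'a set \<Rightarrow> bool" where
  "useful_pair V H e f \<longleftrightarrow> e \<in> H \<and> f \<in> H \<and> e \<noteq> f \<and> e \<inter> f \<noteq> {} \<and>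
     int (card (nbhd H e \<inter> nbhd H f)) \<le> int (card V) - 2"

definition proper_edge_colouring :: "'a set set \<Rightarrow> ('a set \<Rightarrow> 'c) \<Rightarrow> bool" where
  "proper_edge_colouring H c \<longleftrightarrow>
     (\<forall>e\<in>H. \<forall>f\<in>H. e \<noteq> f \<and> e \<inter> f \<noteq> {} \<longrightarrow> c e \<noteq> c f)"

end

theory Submission
  imports Defs
begin

lemma greedy_choice:
  fixes A :: "nat \<Rightarrow> 'b set"
  shows "(\<forall>i\<in>{1..k}. finite (A i) \<and> k \<le> card (A i)) \<Longrightarrow>
     \<exists>g. inj_on g {1..k} \<and> (\<forall>i\<in>{1..k}. g i \<in> A i)"
proof (induction k)
  case 0
  then show ?case by auto
next
  case (Suc k)
  have "\<forall>i\<in>{1..k}. finite (A i) \<and> k \<le> card (A i)"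
  proof
    fix i assume "i \<in> {1..k}"
    then have "i \<in> {1..Suc k}" by auto
    then have "finite (A i) \<and> Suc k \<le> card (A i)" using Suc.prems by blast
    then show "finite (A i) \<and> k \<le> card (A i)" by simp
  qed
  then obtain g where g: "inj_on g {1..k}" "\<forall>i\<in>{1..k}. g i \<in> A i" using Suc.IH by blast
  have fin: "finite (A (Suc k))" and ck: "Suc k \<le> card (A (Suc k))" using Suc.prems by auto
  have "card (g ` {1..k}) \<le> k" using card_image_le[of "{1..k}" g] by simp
  then have "card (A (Suc k) - g ` {1..k}) > 0"
    using ck diff_card_le_card_Diff[of "g ` {1..k}" "A (Suc k)"] by simp
  then have "A (Suc k) - g ` {1..k} \<noteq> {}" by (metis card.empty less_irrefl)
  then obtain y where y: "y \<in> A (Suc k)" "y \<notin> g ` {1..k}" by blast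
  define g' where "g' = g(Suc k := y)"
  have "{1..Suc k} = insert (Suc k) {1..k}" by auto
  moreover have "inj_on g' {1..k}"
  proof -
    have "\<And>i. i \<in> {1..k} \<Longrightarrow> g' i = g i" unfolding g'_def by auto
    then show ?thesis using g(1) inj_on_cong by blast
  qed
  moreover have "g' ` {1..k} = g ` {1..k}" unfolding g'_def by auto
  moreover have "g' (Suc k) = y" unfolding g'_def by simp
  ultimately have "inj_on g' {1..Suc k}" using y by (simp add: inj_on_insert)
  moreover have "\<forall>i\<in>{1..Suc k}. g' i \<in> A i" using g(2) y unfolding g'_def
    by (auto simp: le_Suc_eq)
  ultimately show ?case by blast
qed

lemma idx_inj:
  "inj_on (\<lambda>i. if P i then 2*i - 1 else 2*(i::nat)) {1..t}"
proof (rule inj_onI)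
  fix i j assume a: "i \<in> {1..t}" "j \<in> {1..t}"
    "(if P i then 2*i - 1 else 2*(i::nat)) = (if P j then 2*j - 1 else 2*j)"
  then have "i \<ge> 1" "j \<ge> 1" by auto
  with a(3) show "i = j" by (cases "P i"; cases "P j"; simp; arith)
qed

theorem proposition5p3:
  fixes V :: "'a set" and H :: "'a set set" and e :: "nat \<Rightarrow> 'a set"
  assumes "hypergraph V H"
    and "linear_hg H"
    and "\<forall>i\<in>{1..2*(card H - card V)}. e i \<in> H"
    and "inj_on e {1..2*(card H - card V)}"
    and "\<forall>i\<in>{1..2*(card H - card V)}. \<forall>j\<in>{1..2*(card H - card V)}. e i \<inter> e j \<noteq> {}"
    and "\<forall>i\<in>{1..card H - card V}. useful_pair V H (e (2*i - 1)) (e (2*i))"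
  shows "\<exists>c :: 'a set \<Rightarrow> nat. (\<forall>f\<in>H. c f < card V) \<and> proper_edge_colouring H c \<and>
           (\<forall>k. card {f \<in> H. c f = k} \<le> 2)"
proof -
  define n where "n = card V"
  define t where "t = card H - card V"
  define I where "I = {1..t}"
  define E where "E = e ` {1..2*t}"
  have finV: "finite V" using assms(1) unfolding hypergraph_def by auto
  have "H \<subseteq> Pow V" using assms(1) unfolding hypergraph_def by auto
  then have finH: "finite H" using finV by (meson finite_Pow_iff finite_subset)
  have cardE: "card E = 2*t" unfolding E_def using assms(4) t_def
    by (simp add: card_image)
  have EH: "E \<subseteq> H" unfolding E_def using assms(3) t_def by auto
  have "2*t \<le> card H" using card_mono[OF finH EH] cardE by simp
  define Out where "Out = H - E"
  have cardO: "card Out = card H - 2*t" unfolding Out_def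
    using card_Diff_subset[OF finite_subset[OF EH finH] EH] cardE by simp
  define U where "U i = {h\<in>Out. h \<inter> e(2*i-1) = {} \<or> h \<inter> e(2*i) = {}}" for i
  have finOut: "finite Out" unfolding Out_def using finH by simp
  have Ucard: "t \<le> card (U i)" if i: "i \<in> I" for i
  proof -
    define a where "a = e (2*i-1)"
    define b where "b = e (2*i)"
    have t1: "t \<ge> 1" and cH: "card H = n + t" using i unfolding I_def t_def n_def by auto
    have ai: "2*i-1 \<in> {1..2*t}" "2*i \<in> {1..2*t}" using i unfolding I_def by auto
    have aE: "a \<in> E" "b \<in> E" unfolding a_def b_def E_def using ai by auto
    have ab: "a \<noteq> b" unfolding a_def b_def
    proof
      assume "e (2*i-1) = e (2*i)"
      then have "2*i-1 = 2*i" using inj_onD[OF assms(4)] ai unfolding t_def by blast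
      then show False using i unfolding I_def by auto
    qed
    have up: "int (card (nbhd H a \<inter> nbhd H b)) \<le> int n - 2"
      using assms(6) i unfolding I_def t_def a_def b_def useful_pair_def n_def by auto
    then have up': "card (nbhd H a \<inter> nbhd H b) + 2 \<le> n" by linarith
    have D: "Out - U i \<subseteq> nbhd H a \<inter> nbhd H b - E"
      unfolding Out_def U_def nbhd_def a_def b_def using aE unfolding a_def b_def by auto
    have F: "E - {a,b} \<subseteq> nbhd H a \<inter> nbhd H b"
    proof
      fix h assume h: "h \<in> E - {a,b}"
      then have "h \<in> E" by blast
      then obtain j where j: "j \<in> {1..2*t}" "h = e j" unfolding E_def by blast
      have "h \<inter> a \<noteq> {}" "h \<inter> b \<noteq> {}" using assms(5) j ai unfolding a_def b_def t_def by auto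
      then show "h \<in> nbhd H a \<inter> nbhd H b" using h EH unfolding nbhd_def by auto
    qed
    have finN: "finite (nbhd H a \<inter> nbhd H b)" unfolding nbhd_def using finH by simp
    have "card ((Out - U i) \<union> (E - {a,b})) \<le> card (nbhd H a \<inter> nbhd H b)"
      using D F by (intro card_mono[OF finN]) auto
    moreover have "card ((Out - U i) \<union> (E - {a,b})) = card (Out - U i) + card (E - {a,b})"
      using D finOut EH finH by (intro card_Un_disjoint) (auto intro: finite_subset)
    moreover have "card (E - {a,b}) = 2*t - 2" using cardE aE ab by (simp add: card_Diff_subset)
    moreover have UO: "U i \<subseteq> Out" unfolding U_def by auto
    moreover have "card (Out - U i) = card Out - card (U i)"
      using UO finOut by (simp add: card_Diff_subset finite_subset)
    moreover have "card (U i) \<le> card Out" using UO finOut by (simp add: card_mono)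
    ultimately show ?thesis using up' cardO cH t1 by linarith
  qed
  have "\<forall>i\<in>{1..t}. finite (U i) \<and> t \<le> card (U i)"
    using Ucard finOut unfolding I_def U_def by auto
  then obtain g where g: "inj_on g I" "\<forall>i\<in>I. g i \<in> U i"
    using greedy_choice[of t U] unfolding I_def by blast
  define idx where "idx i = (if g i \<inter> e(2*i-1) = {} then 2*i-1 else 2*i)" for i
  define x where "x i = e (idx i)" for i
  have idxI: "idx ` I \<subseteq> {1..2*t}" unfolding idx_def I_def by auto
  have injidx: "inj_on idx I" unfolding idx_def[abs_def] I_def by (rule idx_inj)
  have "inj_on e (idx ` I)" using inj_on_subset[OF assms(4)] idxI t_def by simp
  then have "inj_on (e \<circ> idx) I" using comp_inj_on[OF injidx] by blast
  then have injx: "inj_on x I" by (simp add: x_def[abs_def] o_def)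
  have gO: "g i \<in> Out" if "i \<in> I" for i using g that unfolding U_def by auto
  have xE: "x i \<in> E" if "i \<in> I" for i using idxI that unfolding x_def E_def by auto
  have xg: "x i \<inter> g i = {}" if "i \<in> I" for i using g that unfolding x_def idx_def U_def by auto
  have xng: "x i \<noteq> g j" if "i \<in> I" "j \<in> I" for i j
    using xE[OF that(1)] gO[OF that(2)] unfolding Out_def by auto
  define R where "R = H - x ` I - g ` I"
  have finR: "finite R" unfolding R_def using finH by simp
  obtain b0 where b0: "bij_betw b0 R {0..<card R}" using ex_bij_betw_finite_nat[OF finR] by blast
  have "x ` I \<union> g ` I \<subseteq> H" using xE gO EH unfolding Out_def by auto
  moreover have "card (x ` I \<union> g ` I) = 2*t"
  proof -
    have "x ` I \<inter> g ` I = {}" using xng by fastforce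
    then have "card (x ` I \<union> g ` I) = card (x ` I) + card (g ` I)"
      by (intro card_Un_disjoint) (auto simp: I_def)
    then show ?thesis using injx g(1) by (simp add: card_image I_def)
  qed
  moreover have "R = H - (x ` I \<union> g ` I)" unfolding R_def by blast
  ultimately have cardR: "card R = card H - 2*t"
    using card_Diff_subset[of "x ` I \<union> g ` I" H] finH finite_subset by metis
  have tn: "t + card R \<le> n" using cardR \<open>2*t \<le> card H\<close> unfolding t_def n_def by linarith
  define c where "c f = (if f \<in> x ` I then inv_into I x f - 1
      else if f \<in> g ` I then inv_into I g f - 1 else t + b0 f)" for f
  have cx: "c (x i) = i - 1" if "i \<in> I" for i
    using that injx unfolding c_def by simp
  have cg: "c (g i) = i - 1" if "i \<in> I" for i
  proof -
    have "g i \<notin> x ` I" using xng that by fastforce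
    then show ?thesis using that g(1) unfolding c_def by simp
  qed
  have cR: "c f = t + b0 f" if "f \<in> R" for f using that unfolding c_def R_def by auto
  have b0R: "b0 f < card R" if "f \<in> R" for f using b0 that by (auto simp: bij_betw_def)
  have Hcases: "f \<in> H \<Longrightarrow> (\<exists>i\<in>I. f = x i) \<or> (\<exists>i\<in>I. f = g i) \<or> f \<in> R" for f
    unfolding R_def by auto
  have Ipos: "i \<in> I \<Longrightarrow> 1 \<le> i \<and> i \<le> t" for i unfolding I_def by auto
  have ij: "i = j" if "i \<in> I" "j \<in> I" "i - 1 = j - 1" for i j
    using that(3) Ipos[OF that(1)] Ipos[OF that(2)] by arith
  have P1: "\<forall>f\<in>H. c f < card V"
  proof
    fix f assume "f \<in> H"
    from Hcases[OF this] show "c f < card V"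
    proof (elim disjE bexE)
      fix i assume "i \<in> I" "f = x i"
      then show ?thesis using cx[of i] Ipos[of i] tn unfolding n_def by auto
    next
      fix i assume "i \<in> I" "f = g i"
      then show ?thesis using cg[of i] Ipos[of i] tn unfolding n_def by auto
    next
      assume "f \<in> R"
      then show ?thesis using cR[of f] b0R[of f] tn unfolding n_def by simp
    qed
  qed
  have P2: "proper_edge_colouring H c"
    unfolding proper_edge_colouring_def
  proof (intro ballI impI)
    fix f f' assume f: "f \<in> H" "f' \<in> H" "f \<noteq> f' \<and> f \<inter> f' \<noteq> {}"
    show "c f \<noteq> c f'"
    proof
      assume eq: "c f = c f'"
      from Hcases[OF f(1)] Hcases[OF f(2)] show False
      proof (elim disjE bexE)
        fix i j assume h: "i \<in> I" "f = x i" "j \<in> I" "f' = x j"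
        then have "i = j" using eq cx[OF h(1)] cx[OF h(3)] ij by simp
        then show False using h f(3) by simp
      next
        fix i j assume h: "i \<in> I" "f = x i" "j \<in> I" "f' = g j"
        then have "i = j" using eq cx[OF h(1)] cg[OF h(3)] ij by simp
        then show False using h f(3) xg[OF h(1)] by simp
      next
        fix i j assume h: "i \<in> I" "f = g i" "j \<in> I" "f' = x j"
        then have "i = j" using eq cg[OF h(1)] cx[OF h(3)] ij by simp
        then show False using h f(3) xg[OF h(1)] by (simp add: inf_commute)
      next
        fix i j assume h: "i \<in> I" "f = g i" "j \<in> I" "f' = g j"
        then have "i = j" using eq cg[OF h(1)] cg[OF h(3)] ij by simp
        then show False using h f(3) by simp
      next
        fix i assume h: "i \<in> I" "f = x i" "f' \<in> R"
        then show False using eq cx[OF h(1)] cR[OF h(3)] Ipos[OF h(1)] by (simp; arith)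
      next
        fix i assume h: "i \<in> I" "f = g i" "f' \<in> R"
        then show False using eq cg[OF h(1)] cR[OF h(3)] Ipos[OF h(1)] by (simp; arith)
      next
        fix i assume h: "f \<in> R" "i \<in> I" "f' = x i"
        then show False using eq cx[OF h(2)] cR[OF h(1)] Ipos[OF h(2)] by (simp; arith)
      next
        fix i assume h: "f \<in> R" "i \<in> I" "f' = g i"
        then show False using eq cg[OF h(2)] cR[OF h(1)] Ipos[OF h(2)] by (simp; arith)
      next
        assume h: "f \<in> R" "f' \<in> R"
        then have "b0 f = b0 f'" using eq cR by simp
        then show False using h b0 f(3) unfolding bij_betw_def inj_on_def by blast
      qed
    qed
  qed
  have P3: "\<forall>k. card {f \<in> H. c f = k} \<le> 2"
  proof
    fix k
    show "card {f \<in> H. c f = k} \<le> 2"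
    proof (cases "k < t")
      case True
      have S1: "{f \<in> H. c f = k} \<subseteq> {x (k+1), g (k+1)}"
      proof
        fix f assume "f \<in> {f \<in> H. c f = k}"
        then have fH: "f \<in> H" and ck: "c f = k" by auto
        from Hcases[OF fH] show "f \<in> {x (k+1), g (k+1)}"
        proof (elim disjE bexE)
          fix i assume h: "i \<in> I" "f = x i"
          then have "i = k + 1" using cx[OF h(1)] ck Ipos[OF h(1)] by (simp; arith)
          then show ?thesis using h by simp
        next
          fix i assume h: "i \<in> I" "f = g i"
          then have "i = k + 1" using cg[OF h(1)] ck Ipos[OF h(1)] by (simp; arith)
          then show ?thesis using h by simp
        next
          assume "f \<in> R" then have False using cR[of f] ck True by simp
          then show ?thesis ..
        qed
      qed
      have c2: "card {x (k+1), g (k+1)} \<le> 2" by (simp add: card_insert_if)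
      have "card {f \<in> H. c f = k} \<le> card {x (k+1), g (k+1)}"
        by (rule card_mono[OF _ S1]) simp
      then show ?thesis using c2 by linarith
    next
      case False
      have sub: "{f \<in> H. c f = k} \<subseteq> {f \<in> R. c f = k}"
      proof
        fix f assume "f \<in> {f \<in> H. c f = k}"
        then have fH: "f \<in> H" and ck: "c f = k" by auto
        from Hcases[OF fH] show "f \<in> {f \<in> R. c f = k}"
        proof (elim disjE bexE)
          fix i assume h: "i \<in> I" "f = x i"
          then have False using cx[OF h(1)] ck Ipos[OF h(1)] False by (simp; arith)
          then show ?thesis ..
        next
          fix i assume h: "i \<in> I" "f = g i"
          then have False using cg[OF h(1)] ck Ipos[OF h(1)] False by (simp; arith)
          then show ?thesis ..
        next
          assume "f \<in> R" then show ?thesis using ck by simp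
        qed
      qed
      have finS: "finite {f \<in> R. c f = k}" using finR by simp
      have "\<forall>a\<in>{f \<in> R. c f = k}. \<forall>b\<in>{f \<in> R. c f = k}. a = b"
      proof (intro ballI)
        fix a b assume "a \<in> {f \<in> R. c f = k}" "b \<in> {f \<in> R. c f = k}"
        then have ab: "a \<in> R" "b \<in> R" "b0 a = b0 b" using cR by auto
        then show "a = b" using b0 unfolding bij_betw_def inj_on_def by blast
      qed
      then have "card {f \<in> R. c f = k} \<le> 1" using card_le_Suc0_iff_eq[OF finS] by simp
      then show ?thesis using card_mono[OF finS sub] by simp
    qed
  qed
  show ?thesis using P1 P2 P3 by blast
qed

end
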